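(* Let $G=(V,E)$ be a directed unweighted graph with diameter $D=3h+z$, where $h\ge1$ and $z\in\{0,1,2\}$, and let $s\in[1,n]$. If $\hat D$ is the output of Approx-Diam$(G)$, then $2h+z\le\hat D\le 3h+z$.
   Context: $d(u,v)$ is the shortest-path distance from $u$ to $v$. $N_s^{\mathrm{out}}(v)$ (resp. $N_s^{\mathrm{in}}(v)$) is the set of the $s$ vertices $u$ with smallest $d(v,u)$ (resp. $d(u,v)$), ties broken by smaller id; $d_s^{\mathrm{out}}(v)=\max_{u\in N_s^{\mathrm{out}}(v)}d(v,u)$, $d_s^{\mathrm{in}}(v)=\max_{u\in N_s^{\mathrm{in}}(v)}d(u,v)$. $B^{\mathrm{out}}(v,r)=\{u: d(v,u)\le r\}$, $B^{\mathrm{in}}(v,r)=\{u:d(u,v)\le r\}$. The Aingworth et al. estimate AGG$_s(G)$ is the maximum of $d^{\mathrm{out}}(w)$, $\max_{u\in N_s^{\mathrm{out}}(w)}d^{\mathrm{in}}(u)$ and $\max_{u\in S}d^{\mathrm{out}}(u)$, where $w$ maximizes $d_s^{\mathrm{out}}$, $S$ is a set meeting every $N_s^{\mathrm{out}}(v)$, $d^{\mathrm{out}}(v)=\max_u d(v,u)$, $d^{\mathrm{in}}(v)=\max_u d(u,v)$. Approx-Diam$(G)$: set $\hat D=\max(\mathrm{AGG}_s(G),\mathrm{AGG}_s(G^R))$, where $G^R$ is $G$ with edges reversed; then for every ordered pair of distinct vertices $(u,v)$ such that $B^{\mathrm{out}}(u,d_s^{\mathrm{out}}(u)-1)\cap B^{\mathrm{in}}(v,d_s^{\mathrm{in}}(v)-1)=\emptyset$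 and there is no edge $(u',v')\in E$ with $u'\in B^{\mathrm{out}}(u,d_s^{\mathrm{out}}(u)-1)$, $v'\in B^{\mathrm{in}}(v,d_s^{\mathrm{in}}(v)-1)$, set $\hat D\gets\max(\hat D,d_s^{\mathrm{out}}(u)+d_s^{\mathrm{in}}(v))$; output $\hat D$. *)

theory Defs
  imports Main
begin

definition dist :: "('a \<times> 'a) set \<Rightarrow> 'a \<Rightarrow> 'a \<Rightarrow> nat" where
  "dist E u v = (LEAST k. (u, v) \<in> E ^^ k)"

definition diameter :: "'a set \<Rightarrow> ('a \<times> 'a) set \<Rightarrow> nat" where
  "diameter V E = Max {dist E u v | u v. u \<in> V \<and> v \<in> V}"

text \<open>Lexicographic strict order on (distance, id) used for tie breaking.\<close>
definition lexless :: "nat \<times> 'a::linorder \<Rightarrow> nat \<times> 'a \<Rightarrow> bool" where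
  "lexless p q = (fst p < fst q \<or> (fst p = fst q \<and> snd p < snd q))"

text \<open>The s vertices u with smallest d(v,u) (resp. d(u,v)), ties broken by smaller id.\<close>
definition Nout :: "'a::linorder set \<Rightarrow> ('a \<times> 'a) set \<Rightarrow> nat \<Rightarrow> 'a \<Rightarrow> 'a set" where
  "Nout V E s v = {u \<in> V. card {x \<in> V. lexless (dist E v x, x) (dist E v u, u)} < s}"

definition Nin :: "'a::linorder set \<Rightarrow> ('a \<times> 'a) set \<Rightarrow> nat \<Rightarrow> 'a \<Rightarrow> 'a set" where
  "Nin V E s v = {u \<in> V. card {x \<in> V. lexless (dist E x v, x) (dist E u v, u)} < s}"

definition dsout :: "'a::linorder set \<Rightarrow> ('a \<times> 'a) set \<Rightarrow> nat \<Rightarrow> 'a \<Rightarrow> nat" where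
  "dsout V E s v = Max ((\<lambda>u. dist E v u) ` Nout V E s v)"

definition dsin :: "'a::linorder set \<Rightarrow> ('a \<times> 'a) set \<Rightarrow> nat \<Rightarrow> 'a \<Rightarrow> nat" where
  "dsin V E s v = Max ((\<lambda>u. dist E u v) ` Nin V E s v)"

definition dout :: "'a set \<Rightarrow> ('a \<times> 'a) set \<Rightarrow> 'a \<Rightarrow> nat" where
  "dout V E v = Max ((\<lambda>u. dist E v u) ` V)"

definition din :: "'a set \<Rightarrow> ('a \<times> 'a) set \<Rightarrow> 'a \<Rightarrow> nat" where
  "din V E v = Max ((\<lambda>u. dist E u v) ` V)"

text \<open>Balls; the radius is an integer so that radius -1 gives the empty ball.\<close>
definition Bout :: "'a set \<Rightarrow> ('a \<times> 'a) set \<Rightarrow> 'a \<Rightarrow> int \<Rightarrow> 'a set" where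
  "Bout V E v r = {u \<in> V. int (dist E v u) \<le> r}"

definition Bin :: "'a set \<Rightarrow> ('a \<times> 'a) set \<Rightarrow> 'a \<Rightarrow> int \<Rightarrow> 'a set" where
  "Bin V E v r = {u \<in> V. int (dist E u v) \<le> r}"

text \<open>Admissible choices in the Aingworth et al. estimate: w maximizes d_s^out, and
  S is a set of vertices meeting every N_s^out(v).\<close>
definition valid_w :: "'a::linorder set \<Rightarrow> ('a \<times> 'a) set \<Rightarrow> nat \<Rightarrow> 'a \<Rightarrow> bool" where
  "valid_w V E s w = (w \<in> V \<and> (\<forall>v\<in>V. dsout V E s v \<le> dsout V E s w))"

definition valid_S :: "'a::linorder set \<Rightarrow> ('a \<times> 'a) set \<Rightarrow> nat \<Rightarrow> 'a set \<Rightarrow> bool" where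
  "valid_S V E s S = (S \<subseteq> V \<and> (\<forall>v\<in>V. S \<inter> Nout V E s v \<noteq> {}))"

definition AGG :: "'a::linorder set \<Rightarrow> ('a \<times> 'a) set \<Rightarrow> nat \<Rightarrow> 'a \<Rightarrow> 'a set \<Rightarrow> nat" where
  "AGG V E s w S = max (dout V E w)
     (max (Max (din V E ` Nout V E s w)) (Max (dout V E ` S)))"

definition pair_cond :: "'a::linorder set \<Rightarrow> ('a \<times> 'a) set \<Rightarrow> nat \<Rightarrow> 'a \<Rightarrow> 'a \<Rightarrow> bool" where
  "pair_cond V E s u v =
    (let Bo = Bout V E u (int (dsout V E s u) - 1);
         Bi = Bin V E v (int (dsin V E s v) - 1)
     in Bo \<inter> Bi = {} \<and> \<not> (\<exists>(u', v') \<in> E. u' \<in> Bo \<and> v' \<in> Bi))"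

text \<open>Output of Approx-Diam(G), given the choices (w, S) for G and (wR, SR) for the reverse graph.\<close>
definition approx_diam :: "'a::linorder set \<Rightarrow> ('a \<times> 'a) set \<Rightarrow> nat \<Rightarrow> 'a \<Rightarrow> 'a set \<Rightarrow> 'a \<Rightarrow> 'a set \<Rightarrow> nat" where
  "approx_diam V E s w S wR SR =
     Max (insert (max (AGG V E s w S) (AGG V (E\<inverse>) s wR SR))
       {dsout V E s u + dsin V E s v | u v. u \<in> V \<and> v \<in> V \<and> u \<noteq> v \<and> pair_cond V E s u v})"

end

theory Submission imports Defs begin

lemma relpow_conv: "(u,v) \<in> ((E::('a\<times>'a) set)\<inverse>)^^k \<longleftrightarrow> (v,u) \<in> E^^k"
proof (induction k arbitrary: v)
  case 0 then show ?case by auto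
next
  case (Suc k)
  show ?case
  proof
    assume "(u,v) \<in> (E\<inverse>)^^Suc k"
    then obtain y where "(u,y) \<in> (E\<inverse>)^^k" "(y,v) \<in> E\<inverse>" by (rule relpow_Suc_E)
    then show "(v,u) \<in> E^^Suc k" using Suc by (metis converse_iff relpow_Suc_I2)
  next
    assume "(v,u) \<in> E^^Suc k"
    then obtain y where "(v,y) \<in> E" "(y,u) \<in> E^^k" by (rule relpow_Suc_E2)
    then show "(u,v) \<in> (E\<inverse>)^^Suc k" using Suc by (metis converse_iff relpow_Suc_I)
  qed
qed

lemma dist_conv: "dist (E\<inverse>) u v = dist E v u"
  unfolding dist_def by (simp add: relpow_conv)

lemma reach_dist: "(u,v) \<in> E\<^sup>* \<Longrightarrow> (u,v) \<in> E ^^ dist E u v"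
  unfolding dist_def by (rule LeastI_ex) (simp add: rtrancl_power)

lemma dist_le: "(u,v) \<in> E^^k \<Longrightarrow> dist E u v \<le> k"
  unfolding dist_def by (rule Least_le)

lemma dist_tri: "(u,v) \<in> E\<^sup>* \<Longrightarrow> (v,w) \<in> E\<^sup>* \<Longrightarrow> dist E u w \<le> dist E u v + dist E v w"
proof -
  assume a: "(u,v) \<in> E\<^sup>*" "(v,w) \<in> E\<^sup>*"
  have "(u,w) \<in> E^^dist E u v O E^^dist E v w" using reach_dist[OF a(1)] reach_dist[OF a(2)] by blast
  then show ?thesis by (intro dist_le) (simp add: relpow_add)
qed

lemma dist_self: "dist E u u = 0"
  using dist_le[where u=u and v=u and E=E and k=0] by simp

lemma dist_edge: "(u,v) \<in> E \<Longrightarrow> dist E u v \<le> 1"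
  by (rule dist_le) simp

lemma dist0: "(u,v) \<in> E\<^sup>* \<Longrightarrow> dist E u v = 0 \<Longrightarrow> v = u"
  using reach_dist[of u v E] by simp

lemma relpow_split: "(u,v) \<in> (E::('a\<times>'a) set)^^(m+n) \<Longrightarrow> \<exists>p. (u,p) \<in> E^^m \<and> (p,v) \<in> E^^n"
  by (simp add: relpow_add) blast

lemma relpow_in_V: "(x,y) \<in> (E::('a\<times>'a) set)^^k \<Longrightarrow> x \<in> V \<Longrightarrow> E \<subseteq> V \<times> V \<Longrightarrow> y \<in> V"
  by (induction k arbitrary: y) (auto elim: relpow_Suc_E)

lemma Nout_conv: "Nout V (E\<inverse>) s v = Nin V E s v"
  unfolding Nout_def Nin_def by (simp add: dist_conv)
lemma dsout_conv: "dsout V (E\<inverse>) s v = dsin V E s v"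
  unfolding dsout_def dsin_def by (simp add: Nout_conv dist_conv)
lemma dout_conv: "dout V (E\<inverse>) v = din V E v"
  unfolding dout_def din_def by (simp add: dist_conv)
lemma din_conv: "din V (E\<inverse>) v = dout V E v"
  unfolding dout_def din_def by (simp add: dist_conv)

lemma sc_conv: "\<forall>u\<in>V. \<forall>v\<in>V. (u, v) \<in> E\<^sup>* \<Longrightarrow> \<forall>u\<in>V. \<forall>v\<in>V. (u, v) \<in> (E\<inverse>)\<^sup>*"
  by (simp add: rtrancl_converse)

lemma self_in_Nout:
  assumes sc: "\<forall>u\<in>V. \<forall>v\<in>V. (u, v) \<in> E\<^sup>*" and "v \<in> V" "1 \<le> s"
  shows "v \<in> Nout V E s v"
proof -
  have "{x \<in> V. lexless (dist E v x, x) (dist E v v, v)} = {}"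
  proof (rule ccontr)
    assume "{x \<in> V. lexless (dist E v x, x) (dist E v v, v)} \<noteq> {}"
    then obtain x where x: "x \<in> V" "lexless (dist E v x, x) (dist E v v, v)" by blast
    then have "dist E v x = 0" "x < v" by (auto simp: lexless_def dist_self)
    with dist0[of v x E] sc x(1) \<open>v \<in> V\<close> show False by auto
  qed
  then have "card {x \<in> V. lexless (dist E v x, x) (dist E v v, v)} = 0" by (simp only: card.empty)
  then show ?thesis using assms unfolding Nout_def by simp
qed

lemma self_in_Nin:
  assumes sc: "\<forall>u\<in>V. \<forall>v\<in>V. (u, v) \<in> E\<^sup>*" and "v \<in> V" "1 \<le> s"
  shows "v \<in> Nin V E s v"
  using self_in_Nout[OF sc_conv[OF sc] assms(2,3)] by (simp add: Nout_conv)

lemma Nout_sub: "Nout V E s v \<subseteq> V" unfolding Nout_def by auto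
lemma Nin_sub: "Nin V E s v \<subseteq> V" unfolding Nin_def by auto

lemma dsout_ge: "finite V \<Longrightarrow> u \<in> Nout V E s v \<Longrightarrow> dist E v u \<le> dsout V E s v"
  unfolding dsout_def by (rule Max_ge) (auto intro: finite_subset[OF Nout_sub])

lemma dsout_attained: "finite V \<Longrightarrow> Nout V E s v \<noteq> {} \<Longrightarrow> \<exists>y\<in>Nout V E s v. dsout V E s v = dist E v y"
proof -
  assume a: "finite V" "Nout V E s v \<noteq> {}"
  have "Max ((\<lambda>u. dist E v u) ` Nout V E s v) \<in> (\<lambda>u. dist E v u) ` Nout V E s v"
    by (rule Max_in) (use a in \<open>auto intro: finite_subset[OF Nout_sub]\<close>)
  then show ?thesis unfolding dsout_def by auto
qed

lemma lexless_trans: "lexless p q \<Longrightarrow> lexless q r \<Longrightarrow> lexless p r"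
  unfolding lexless_def by auto

lemma Nout_ball:
  assumes fin: "finite V" and ne: "Nout V E s v \<noteq> {}" and u: "u \<in> V"
    and lt: "dist E v u < dsout V E s v"
  shows "u \<in> Nout V E s v"
proof -
  obtain y where y: "y \<in> Nout V E s v" "dsout V E s v = dist E v y"
    using dsout_attained[OF fin ne] by blast
  have "{x \<in> V. lexless (dist E v x, x) (dist E v u, u)} \<subseteq> {x \<in> V. lexless (dist E v x, x) (dist E v y, y)}"
    using lt y(2) by (auto simp: lexless_def)
  then have "card {x \<in> V. lexless (dist E v x, x) (dist E v u, u)} \<le> card {x \<in> V. lexless (dist E v x, x) (dist E v y, y)}"
    by (rule card_mono[rotated]) (simp add: fin)
  then show ?thesis using y(1) u unfolding Nout_def by auto
qed

lemma dout_ge: "finite V \<Longrightarrow> u \<in> V \<Longrightarrow> dist E v u \<le> dout V E v"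
  unfolding dout_def by (rule Max_ge) auto
lemma din_ge: "finite V \<Longrightarrow> u \<in> V \<Longrightarrow> dist E u v \<le> din V E v"
  unfolding din_def by (rule Max_ge) auto

lemma AGG_ge1: "dout V E w \<le> AGG V E s w S" unfolding AGG_def by simp
lemma AGG_ge2: "finite V \<Longrightarrow> u \<in> Nout V E s w \<Longrightarrow> din V E u \<le> AGG V E s w S"
proof -
  assume a: "finite V" "u \<in> Nout V E s w"
  have "din V E u \<le> Max (din V E ` Nout V E s w)"
    by (rule Max_ge) (use a in \<open>auto intro: finite_subset[OF Nout_sub]\<close>)
  then show ?thesis unfolding AGG_def by (simp add: le_max_iff_disj)
qed
lemma AGG_ge3: "finite V \<Longrightarrow> S \<subseteq> V \<Longrightarrow> x \<in> S \<Longrightarrow> dout V E x \<le> AGG V E s w S"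
proof -
  assume a: "finite V" "S \<subseteq> V" "x \<in> S"
  have "dout V E x \<le> Max (dout V E ` S)"
    by (rule Max_ge) (use a in \<open>auto intro: finite_subset\<close>)
  then show ?thesis unfolding AGG_def by (simp add: le_max_iff_disj)
qed


lemma LB1:
  assumes fin: "finite V" and EV: "E \<subseteq> V \<times> V" and sc: "\<forall>u\<in>V. \<forall>v\<in>V. (u, v) \<in> E\<^sup>*"
    and vS: "valid_S V E s S" and a: "a \<in> V" and b: "b \<in> V" and D: "dist E a b = D"
  shows "D \<le> AGG V E s w S + dsout V E s a"
proof -
  obtain x where x: "x \<in> S" "x \<in> Nout V E s a" using vS a unfolding valid_S_def by blast
  have SV: "S \<subseteq> V" using vS unfolding valid_S_def by auto
  have xV: "x \<in> V" using x SV by auto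
  have "D \<le> dist E a x + dist E x b" using dist_tri[of a x E b] sc a b xV D by auto
  also have "dist E a x \<le> dsout V E s a" by (rule dsout_ge[OF fin x(2)])
  also have "dist E x b \<le> dout V E x" by (rule dout_ge[OF fin b])
  also have "dout V E x \<le> AGG V E s w S" by (rule AGG_ge3[OF fin SV x(1)])
  finally show ?thesis by simp
qed

lemma LB2:
  assumes fin: "finite V" and EV: "E \<subseteq> V \<times> V" and sc: "\<forall>u\<in>V. \<forall>v\<in>V. (u, v) \<in> E\<^sup>*"
    and s1: "1 \<le> s" and vw: "valid_w V E s w" and a: "a \<in> V" and b: "b \<in> V" and D: "dist E a b = D"
    and r1: "1 \<le> dsout V E s a" and mD: "m \<le> D"
  shows "m \<le> AGG V E s w S \<or> D + dsout V E s a \<le> AGG V E s w S + m"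
proof (cases "m \<le> dout V E w")
  case True then show ?thesis using AGG_ge1[of V E w s S] by simp
next
  case False
  have wV: "w \<in> V" and rw: "dsout V E s a \<le> dsout V E s w" using vw a unfolding valid_w_def by auto
  define dwb where "dwb = dist E w b"
  have dwb: "dwb < m" using False dout_ge[OF fin b, of E w] dwb_def by simp
  define t where "t = min (dsout V E s w - 1) dwb"
  have "(w,b) \<in> E^^(t + (dwb - t))" using reach_dist[of w b E] sc wV b dwb_def t_def by auto
  then obtain u where u1: "(w,u) \<in> E^^t" and u2: "(u,b) \<in> E^^(dwb - t)" by (blast dest: relpow_split)
  have uV: "u \<in> V" using relpow_in_V[OF u1 wV EV] .
  have ne: "Nout V E s w \<noteq> {}" using self_in_Nout[OF sc wV s1] by auto
  have "dist E w u < dsout V E s w" using dist_le[OF u1] t_def r1 rw by auto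
  then have uN: "u \<in> Nout V E s w" using Nout_ball[OF fin ne uV] by simp
  have "D \<le> dist E a u + dist E u b" using dist_tri[of a u E b] sc a b uV D by auto
  moreover have "dist E u b \<le> dwb - t" using dist_le[OF u2] .
  moreover have "dist E a u \<le> din V E u" by (rule din_ge[OF fin a])
  moreover have "din V E u \<le> AGG V E s w S" by (rule AGG_ge2[OF fin uN])
  ultimately have "D \<le> AGG V E s w S + (dwb - t)" by linarith
  then show ?thesis using mD dwb rw r1 unfolding t_def by (cases "dsout V E s w - 1 \<le> dwb") auto
qed

lemma pair_fail:
  assumes EV: "E \<subseteq> V \<times> V" and sc: "\<forall>u\<in>V. \<forall>v\<in>V. (u, v) \<in> E\<^sup>*"
    and a: "a \<in> V" and b: "b \<in> V"
    and np: "\<not> pair_cond V E s a b"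
  shows "dist E a b + 1 \<le> dsout V E s a + dsin V E s b"
proof -
  let ?r = "dsout V E s a" and ?q = "dsin V E s b"
  from np consider x where "x \<in> V" "int (dist E a x) \<le> int ?r - 1" "int (dist E x b) \<le> int ?q - 1"
    | u' v' where "(u',v') \<in> E" "u' \<in> V" "v' \<in> V" "int (dist E a u') \<le> int ?r - 1" "int (dist E v' b) \<le> int ?q - 1"
    unfolding pair_cond_def Let_def Bout_def Bin_def by blast
  then show ?thesis
  proof cases
    case (1 x)
    have "dist E a b \<le> dist E a x + dist E x b" using dist_tri[of a x E b] sc a b 1 by auto
    then show ?thesis using 1 by linarith
  next
    case (2 u' v')
    have "dist E a b \<le> dist E a u' + dist E u' b" using dist_tri[of a u' E b] sc a b 2 by auto
    moreover have "dist E u' b \<le> dist E u' v' + dist E v' b" using dist_tri[of u' v' E b] sc b 2 by auto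
    moreover have "dist E u' v' \<le> 1" using dist_edge 2 by auto
    ultimately show ?thesis using 2 by linarith
  qed
qed

lemma pair_ok:
  assumes EV: "E \<subseteq> V \<times> V" and sc: "\<forall>u\<in>V. \<forall>v\<in>V. (u, v) \<in> E\<^sup>*"
    and u: "u \<in> V" and v: "v \<in> V" and pc: "pair_cond V E s u v"
    and r1: "1 \<le> dsout V E s u" and q1: "1 \<le> dsin V E s v"
  shows "dsout V E s u + dsin V E s v \<le> dist E u v"
proof (rule ccontr)
  let ?r = "dsout V E s u" and ?q = "dsin V E s v"
  define L where "L = dist E u v"
  assume "\<not> ?r + ?q \<le> dist E u v"
  then have L: "L < ?r + ?q" using L_def by simp
  have uv: "(u,v) \<in> E^^L" using reach_dist[of u v E] sc u v L_def by auto
  have disj: "\<And>x. x \<in> V \<Longrightarrow> int (dist E u x) \<le> int ?r - 1 \<Longrightarrow> int (dist E x v) \<le> int ?q - 1 \<Longrightarrow> False"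
    and noe: "\<And>p p'. (p,p') \<in> E \<Longrightarrow> p \<in> V \<Longrightarrow> p' \<in> V \<Longrightarrow> int (dist E u p) \<le> int ?r - 1 \<Longrightarrow> int (dist E p' v) \<le> int ?q - 1 \<Longrightarrow> False"
    using pc unfolding pair_cond_def Let_def Bout_def Bin_def by blast+
  show False
  proof (cases "L \<le> ?r - 1")
    case True
    then show False using disj[OF v] L_def dist_self[of E v] r1 q1 by linarith
  next
    case False
    have "(u,v) \<in> E^^((?r - 1) + Suc (L - ?r))" using uv False r1 by (simp add: Suc_diff_le)
    then obtain p where p1: "(u,p) \<in> E^^(?r - 1)" and p2: "(p,v) \<in> E^^Suc (L - ?r)" by (blast dest: relpow_split)
    then obtain p' where pp: "(p,p') \<in> E" and p3: "(p',v) \<in> E^^(L - ?r)" by (blast elim: relpow_Suc_E2)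
    have "p \<in> V" "p' \<in> V" using pp EV by auto
    moreover have "dist E u p \<le> ?r - 1" using dist_le[OF p1] .
    moreover have "dist E p' v \<le> L - ?r" using dist_le[OF p3] .
    ultimately show False using noe[OF pp] r1 q1 L False by linarith
  qed
qed


lemma dout_le: "finite V \<Longrightarrow> v \<in> V \<Longrightarrow> \<forall>u\<in>V. \<forall>v\<in>V. dist E u v \<le> M \<Longrightarrow> dout V E v \<le> M"
  unfolding dout_def by (subst Max_le_iff) auto
lemma din_le: "finite V \<Longrightarrow> v \<in> V \<Longrightarrow> \<forall>u\<in>V. \<forall>v\<in>V. dist E u v \<le> M \<Longrightarrow> din V E v \<le> M"
  unfolding din_def by (subst Max_le_iff) auto
lemma dsout_le: "finite V \<Longrightarrow> v \<in> Nout V E s v \<Longrightarrow> \<forall>u\<in>V. \<forall>v\<in>V. dist E u v \<le> M \<Longrightarrow> dsout V E s v \<le> M"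
  unfolding dsout_def using Nout_sub[of V E s v]
  by (subst Max_le_iff) (auto intro: finite_subset)
lemma dsin_le: "finite V \<Longrightarrow> v \<in> Nin V E s v \<Longrightarrow> \<forall>u\<in>V. \<forall>v\<in>V. dist E u v \<le> M \<Longrightarrow> dsin V E s v \<le> M"
  unfolding dsin_def using Nin_sub[of V E s v]
  by (subst Max_le_iff) (auto intro: finite_subset)

lemma AGG_le:
  assumes fin: "finite V" and sc: "\<forall>u\<in>V. \<forall>v\<in>V. (u, v) \<in> E\<^sup>*" and s1: "1 \<le> s"
    and w: "w \<in> V" and SV: "S \<subseteq> V" and Sne: "S \<noteq> {}"
    and bnd: "\<forall>u\<in>V. \<forall>v\<in>V. dist E u v \<le> M"
  shows "AGG V E s w S \<le> M"
proof -
  have "dout V E w \<le> M" using dout_le[OF fin w bnd] .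
  moreover have "Max (din V E ` Nout V E s w) \<le> M"
    using self_in_Nout[OF sc w s1] Nout_sub[of V E s w] din_le[OF fin _ bnd]
    by (subst Max_le_iff) (auto intro: finite_subset[OF _ fin])
  moreover have "Max (dout V E ` S) \<le> M"
    using SV Sne dout_le[OF fin _ bnd]
    by (subst Max_le_iff) (auto intro: finite_subset[OF _ fin])
  ultimately show ?thesis unfolding AGG_def by simp
qed

theorem lemma8:
  fixes V :: "'a::linorder set" and E :: "('a \<times> 'a) set"
    and s h z :: nat and w wR :: 'a and S SR :: "'a set"
  assumes "finite V" and "E \<subseteq> V \<times> V"
    and "\<forall>u\<in>V. \<forall>v\<in>V. (u, v) \<in> E\<^sup>*"
    and "diameter V E = 3 * h + z" and "h \<ge> 1" and "z \<le> 2"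
    and "1 \<le> s" and "s \<le> card V"
    and "valid_w V E s w" and "valid_S V E s S"
    and "valid_w V (E\<inverse>) s wR" and "valid_S V (E\<inverse>) s SR"
  shows "2 * h + z \<le> approx_diam V E s w S wR SR \<and> approx_diam V E s w S wR SR \<le> 3 * h + z"
proof -
  note fin = assms(1) and EV = assms(2) and sc = assms(3) and s1 = assms(7)
  have EVR: "E\<inverse> \<subseteq> V \<times> V" using EV by auto
  have scR: "\<forall>u\<in>V. \<forall>v\<in>V. (u, v) \<in> (E\<inverse>)\<^sup>*" using sc_conv[OF sc] .
  define D where "D = 3 * h + z"
  have Vne: "V \<noteq> {}" using assms(7,8) by auto
  define DS where "DS = {dist E u v | u v. u \<in> V \<and> v \<in> V}"
  have DSfin: "finite DS" unfolding DS_def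
    using finite_imageI[OF finite_cartesian_product[OF fin fin], of "\<lambda>(u,v). dist E u v"]
    by (rule finite_subset[rotated]) auto
  have DSne: "DS \<noteq> {}" using Vne unfolding DS_def by auto
  have diam: "Max DS = D" using assms(4) unfolding diameter_def DS_def D_def by simp
  have bnd: "\<forall>u\<in>V. \<forall>v\<in>V. dist E u v \<le> D"
    using Max_ge[OF DSfin] diam unfolding DS_def by fastforce
  have bndR: "\<forall>u\<in>V. \<forall>v\<in>V. dist (E\<inverse>) u v \<le> D" using bnd by (simp add: dist_conv)
  obtain a b where a: "a \<in> V" and b: "b \<in> V" and ab: "dist E a b = D"
    using Max_in[OF DSfin DSne] diam unfolding DS_def by auto
  have SV: "S \<subseteq> V" "S \<noteq> {}" using assms(10) Vne unfolding valid_S_def by auto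
  have SRV: "SR \<subseteq> V" "SR \<noteq> {}" using assms(12) Vne unfolding valid_S_def by auto
  have wV: "w \<in> V" using assms(9) unfolding valid_w_def by auto
  have wRV: "wR \<in> V" using assms(11) unfolding valid_w_def by auto
  define A where "A = AGG V E s w S"
  define AR where "AR = AGG V (E\<inverse>) s wR SR"
  define P where "P = {dsout V E s u + dsin V E s v | u v. u \<in> V \<and> v \<in> V \<and> u \<noteq> v \<and> pair_cond V E s u v}"
  have Pfin: "finite P" unfolding P_def
    using finite_imageI[OF finite_cartesian_product[OF fin fin], of "\<lambda>(u,v). dsout V E s u + dsin V E s v"]
    by (rule finite_subset[rotated]) auto
  have out: "approx_diam V E s w S wR SR = Max (insert (max A AR) P)"
    unfolding approx_diam_def A_def AR_def P_def by simp
  have AD: "A \<le> D" unfolding A_def by (rule AGG_le[OF fin sc s1 wV SV bnd])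
  have ARD: "AR \<le> D" unfolding AR_def by (rule AGG_le[OF fin scR s1 wRV SRV bndR])
  have PD: "\<forall>x\<in>P. x \<le> D"
  proof
    fix x assume "x \<in> P"
    then obtain u v where uv: "u \<in> V" "v \<in> V" "pair_cond V E s u v" and x: "x = dsout V E s u + dsin V E s v"
      unfolding P_def by auto
    have ro: "dsout V E s u \<le> D" using dsout_le[OF fin self_in_Nout[OF sc uv(1) s1] bnd] .
    have ri: "dsin V E s v \<le> D" using dsin_le[OF fin self_in_Nin[OF sc uv(2) s1] bnd] .
    show "x \<le> D"
    proof (cases "1 \<le> dsout V E s u \<and> 1 \<le> dsin V E s v")
      case True
      then have "x \<le> dist E u v" using pair_ok[OF EV sc uv] x by auto
      then show ?thesis using bnd uv by fastforce
    next
      case False then show ?thesis using ro ri x by auto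
    qed
  qed
  have upper: "approx_diam V E s w S wR SR \<le> D"
    unfolding out using AD ARD PD Pfin by (subst Max_le_iff) auto
  define r where "r = dsout V E s a"
  define q where "q = dsin V E s b"
  have geA: "max A AR \<le> approx_diam V E s w S wR SR" unfolding out using Pfin by (intro Max_ge) auto
  have L1: "D \<le> A + r" unfolding A_def r_def by (rule LB1[OF fin EV sc assms(10) a b ab])
  have L2: "1 \<le> r \<Longrightarrow> 2*h+z \<le> A \<or> D + r \<le> A + (2*h+z)"
    unfolding A_def r_def by (rule LB2[OF fin EV sc s1 assms(9) a b ab]) (auto simp: D_def)
  have abR: "dist (E\<inverse>) b a = D" using ab by (simp add: dist_conv)
  have L3: "D \<le> AR + q" unfolding AR_def q_def
    using LB1[OF fin EVR scR assms(12) b a abR] by (simp add: dsout_conv)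
  have L4: "1 \<le> q \<Longrightarrow> 2*h+z \<le> AR \<or> D + q \<le> AR + (2*h+z)"
    unfolding AR_def q_def
    using LB2[OF fin EVR scR s1 assms(11) b a abR, of "2*h+z" SR] by (auto simp: dsout_conv D_def)
  have ab_ne: "a \<noteq> b" using ab dist_self[of E a] assms(5) D_def by auto
  have L5: "pair_cond V E s a b \<Longrightarrow> r + q \<le> approx_diam V E s w S wR SR"
    unfolding out r_def q_def using Pfin a b ab_ne by (intro Max_ge) (auto simp: P_def)
  have L6: "\<not> pair_cond V E s a b \<Longrightarrow> D + 1 \<le> r + q"
    unfolding r_def q_def using pair_fail[OF EV sc a b] ab by auto
  have lower: "2*h+z \<le> approx_diam V E s w S wR SR"
  proof (cases "pair_cond V E s a b")
    case True
    then show ?thesis using L1 L2 L3 L4 L5 geA assms(5,6) unfolding D_def by (cases "1 \<le> r"; cases "1 \<le> q") auto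
  next
    case False
    then show ?thesis using L1 L2 L3 L4 L6 geA assms(5,6) unfolding D_def by (cases "1 \<le> r"; cases "1 \<le> q") auto
  qed
  show ?thesis using upper lower D_def by simp
qed

end
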